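(* Let $m\neq\pm1$ be a square-free integer, $p$ a prime, $k$ a positive integer, $\alpha$ a root of $X^{p^k}-m$, $M=\mathbb{Q}(\alpha)$, $r$ the remainder of $m$ modulo $p^{k+1}$, $s:=v_p(m^p-m)-1$, and for $t\in\mathbb{N}$ let $h^{(r)}_t(X)=\frac{X^{p^k}-r^{p^t}}{X^{p^{k-t}}-r}=\sum_{i=0}^{p^t-1} r^{i}X^{p^k-(i+1)p^{k-t}}\in\mathbb{Z}[X]$. Suppose $s<k$. Then the following $p^k$ elements of $M$ are algebraic integers and are linearly independent over $\mathbb{Q}$: $$\alpha^j\cdot\frac{h^{(r)}_t(\alpha)}{p^t}\quad\text{for } 0\leq t\leq s-1,\ 0\leq j\leq p^{k-t}-p^{k-t-1}-1,$$ together with $$\alpha^j\cdot\frac{h^{(r)}_s(\alpha)}{p^s}\quad\text{for } 0\leq j\leq p^{k-s}-1.$$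
   Context: $v_p$ denotes the $p$-adic valuation on $\mathbb{Q}$. *)

theory Defs
  imports "HOL-Computational_Algebra.Computational_Algebra" "HOL-Complex_Analysis.Complex_Analysis"
begin

definition h_poly :: "int \<Rightarrow> nat \<Rightarrow> nat \<Rightarrow> nat \<Rightarrow> int poly" where
  "h_poly r p k t = (\<Sum>i<p^t. monom (r^i) (p^k - (i+1) * p^(k-t)))"

definition basis_index :: "nat \<Rightarrow> nat \<Rightarrow> nat \<Rightarrow> (nat \<times> nat) set" where
  "basis_index p k s =
     {(t,j). t < s \<and> j < p^(k-t) - p^(k-t-1)} \<union> {(t,j). t = s \<and> j < p^(k-s)}"

definition basis_elem :: "int \<Rightarrow> nat \<Rightarrow> nat \<Rightarrow> complex \<Rightarrow> nat \<times> nat \<Rightarrow> complex" where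
  "basis_elem r p k \<alpha> tj = (case tj of (t,j) \<Rightarrow>
     \<alpha>^j * poly (map_poly of_int (h_poly r p k t)) \<alpha> / of_nat (p^t))"

end

theory Submission
  imports "Berlekamp_Zassenhaus.Factor_Bound" "Jordan_Normal_Form.Char_Poly" Defs
begin


lemma alg_int_module:
  fixes x :: complex and B :: "nat \<Rightarrow> complex" and N :: nat
  assumes B0: "B 0 \<noteq> 0" and N: "N > 0"
    and cl: "\<forall>i<N. \<exists>c. x * B i = (\<Sum>l<N. of_int (c l) * B l)"
  shows "algebraic_int x"
proof -
  from cl have "\<forall>i. \<exists>c. i < N \<longrightarrow> x * B i = (\<Sum>l<N. of_int (c l) * B l)" by blast
  then obtain C where C: "\<And>i. i < N \<Longrightarrow> x * B i = (\<Sum>l<N. of_int (C i l) * B l)"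
    by metis
  define A :: "int Matrix.mat" where "A = Matrix.mat N N (\<lambda>(i,l). C i l)"
  define v :: "complex Matrix.vec" where "v = Matrix.vec N B"
  have A: "A \<in> carrier_mat N N" by (simp add: A_def)
  have Ac: "map_mat of_int A \<in> carrier_mat N N" by (simp add: A_def)
  have v: "v \<in> carrier_vec N" by (simp add: v_def)
  have v0: "v \<noteq> 0\<^sub>v N"
  proof
    assume "v = 0\<^sub>v N"
    hence "vec_index v 0 = 0" using N by simp
    thus False using B0 N by (simp add: v_def)
  qed
  have Av: "map_mat of_int A *\<^sub>v v = x \<cdot>\<^sub>v v"
  proof (rule eq_vecI)
    show "dim_vec (map_mat of_int A *\<^sub>v v) = dim_vec (x \<cdot>\<^sub>v v)" by (simp add: A_def v_def)
    fix i assume "i < dim_vec (x \<cdot>\<^sub>v v)"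
    hence i: "i < N" by (simp add: v_def)
    have "vec_index (map_mat of_int A *\<^sub>v v) i = (\<Sum>l<N. of_int (C i l) * B l)"
      using i by (simp add: A_def v_def mult_mat_vec_def scalar_prod_def atLeast0LessThan)
    also have "\<dots> = x * B i" using C[OF i] by simp
    finally show "vec_index (map_mat of_int A *\<^sub>v v) i = vec_index (x \<cdot>\<^sub>v v) i" using i by (simp add: v_def)
  qed
  have "eigenvector (map_mat of_int A) v x"
    unfolding eigenvector_def using v v0 Av Ac by auto
  hence "eigenvalue (map_mat of_int A) x" unfolding eigenvalue_def by blast
  hence "poly (char_poly (map_mat of_int A)) x = 0"
    by (subst (asm) eigenvalue_root_char_poly[OF Ac])
  moreover have "char_poly (map_mat of_int A) = (map_poly of_int (char_poly A) :: complex poly)"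
    by (rule of_int_hom.char_poly_hom[OF A])
  ultimately have "poly (map_poly of_int (char_poly A)) x = 0"
    by simp
  moreover have "lead_coeff (char_poly A) = 1"
    using degree_monic_char_poly[OF A] by simp
  ultimately show ?thesis using algebraic_int_altdef_ipoly by blast
qed




definition zspan :: "(nat \<Rightarrow> complex) \<Rightarrow> nat \<Rightarrow> complex set" where
  "zspan B N = {z. \<exists>c. z = (\<Sum>l<N. of_int (c l) * B l)}"

lemma zspanI: "z = (\<Sum>l<N. of_int (c l) * B l) \<Longrightarrow> z \<in> zspan B N"
  unfolding zspan_def mem_Collect_eq by (rule exI)

lemma zspan_0: "0 \<in> zspan B N"
  by (rule zspanI[where c = "\<lambda>_. 0"]) simp

lemma zspan_add: "z \<in> zspan B N \<Longrightarrow> w \<in> zspan B N \<Longrightarrow> z + w \<in> zspan B N"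
proof -
  assume "z \<in> zspan B N" "w \<in> zspan B N"
  then obtain c d where "z = (\<Sum>l<N. of_int (c l) * B l)" "w = (\<Sum>l<N. of_int (d l) * B l)"
    unfolding zspan_def by blast
  hence "z + w = (\<Sum>l<N. of_int (c l + d l) * B l)"
    by (simp add: sum.distrib distrib_right)
  thus ?thesis by (rule zspanI)
qed

lemma zspan_smult: "z \<in> zspan B N \<Longrightarrow> of_int k * z \<in> zspan B N"
proof -
  assume "z \<in> zspan B N"
  then obtain c where "z = (\<Sum>l<N. of_int (c l) * B l)"
    unfolding zspan_def by blast
  hence "of_int k * z = (\<Sum>l<N. of_int (k * c l) * B l)"
    by (simp add: sum_distrib_left mult.assoc)
  thus ?thesis by (rule zspanI)
qed

lemma zspan_sum: "finite A \<Longrightarrow> (\<And>a. a \<in> A \<Longrightarrow> f a \<in> zspan B N) \<Longrightarrow> sum f A \<in> zspan B N"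
  by (induction A rule: finite_induct) (auto intro: zspan_0 zspan_add)

lemma zspan_basis: "i < N \<Longrightarrow> B i \<in> zspan B N"
proof -
  assume i: "i < N"
  have "(\<Sum>l<N. of_int (if l = i then 1 else 0) * B l) = (\<Sum>l<N. if l = i then B l else 0)"
    by (rule sum.cong) auto
  also have "\<dots> = B i" using i by simp
  finally show ?thesis by (intro zspanI[where c = "\<lambda>l. if l = i then 1 else 0"]) (rule sym)
qed


lemma alg_int_pow_prod:
  fixes x y :: complex and d e :: nat and P Q :: "nat \<Rightarrow> int"
  assumes d: "d > 0" and e: "e > 0"
    and xd: "x ^ d = (\<Sum>i<d. of_int (P i) * x ^ i)"
    and ye: "y ^ e = (\<Sum>i<e. of_int (Q i) * y ^ i)"
  shows "algebraic_int (x ^ a * y ^ b)"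
proof -
  define N where "N = d * e"
  define B where "B = (\<lambda>i. x ^ (i div e) * y ^ (i mod e))"
  have N: "N > 0" using d e by (simp add: N_def)
  have base: "x ^ a' * y ^ b' \<in> zspan B N" if "a' < d" "b' < e" for a' b'
  proof -
    have "a' * e + b' < a' * e + e" using that by simp
    also have "\<dots> = Suc a' * e" by simp
    also have "\<dots> \<le> d * e" using that by (intro mult_le_mono1) simp
    finally have "a' * e + b' < N" unfolding N_def .
    moreover have "B (a' * e + b') = x ^ a' * y ^ b'" using that e by (simp add: B_def)
    ultimately show ?thesis using zspan_basis by metis
  qed
  have stepx: "x ^ a' * y ^ b' \<in> zspan B N" if "b' < e" for a' b'
    using that
  proof (induction a' rule: less_induct)
    case (less a')
    show ?case
    proof (cases "a' < d")
      case True thus ?thesis using base less.prems by blast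
    next
      case False
      have "x ^ a' * y ^ b' = x ^ (a' - d) * x ^ d * y ^ b'"
        using False by (simp add: power_add[symmetric])
      also have "\<dots> = (\<Sum>i<d. of_int (P i) * (x ^ (a' - d + i) * y ^ b'))"
        by (simp add: xd sum_distrib_left sum_distrib_right power_add mult_ac)
      also have "\<dots> \<in> zspan B N"
        by (rule zspan_sum) (use False less in \<open>auto intro!: zspan_smult\<close>)
      finally show ?thesis .
    qed
  qed
  have stepy: "x ^ a' * y ^ b' \<in> zspan B N" for a' b'
  proof (induction b' arbitrary: a' rule: less_induct)
    case (less b')
    show ?case
    proof (cases "b' < e")
      case True thus ?thesis using stepx by blast
    next
      case False
      have "x ^ a' * y ^ b' = x ^ a' * (y ^ (b' - e) * y ^ e)"
        using False by (simp add: power_add[symmetric])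
      also have "\<dots> = (\<Sum>i<e. of_int (Q i) * (x ^ a' * y ^ (b' - e + i)))"
        by (simp add: ye sum_distrib_left sum_distrib_right power_add mult_ac)
      also have "\<dots> \<in> zspan B N"
        by (rule zspan_sum) (use False e less in \<open>auto intro!: zspan_smult\<close>)
      finally show ?thesis .
    qed
  qed
  show ?thesis
  proof (rule alg_int_module[of B N])
    show "B 0 \<noteq> 0" by (simp add: B_def)
    show "N > 0" by (fact N)
    show "\<forall>i<N. \<exists>c. x ^ a * y ^ b * B i = (\<Sum>l<N. of_int (c l) * B l)"
    proof (intro allI impI)
      fix i assume "i < N"
      have "x ^ a * y ^ b * B i = x ^ (a + i div e) * y ^ (b + i mod e)"
        by (simp add: B_def power_add mult_ac)
      also have "\<dots> \<in> zspan B N" by (rule stepy)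
      finally show "\<exists>c. x ^ a * y ^ b * B i = (\<Sum>l<N. of_int (c l) * B l)"
        unfolding zspan_def by blast
    qed
  qed
qed




lemma binom_pdvd:
  fixes p t j :: nat
  assumes p: "prime p" and j1: "1 \<le> j" and jT: "j \<le> p ^ t"
  shows "p ^ (t - (j - 1)) dvd (p ^ t choose j)"
proof -
  define C where "C = p ^ t choose j"
  have C0: "C \<noteq> 0" using jT by (simp add: C_def)
  have j0: "j \<noteq> 0" using j1 by simp
  have jC: "j * C = p ^ t * ((p ^ t - 1) choose (j - 1))"
    unfolding C_def using j1 by (intro times_binomial_minus1_eq) simp
  define e where "e = multiplicity p j"
  have "p ^ e dvd j" unfolding e_def by (rule multiplicity_dvd)
  hence "p ^ e \<le> j" using j0 by (intro dvd_imp_le) auto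
  moreover have "e < 2 ^ e" by (rule less_exp)
  moreover have "2 ^ e \<le> p ^ e" using prime_ge_2_nat[OF p] by (intro power_mono) auto
  ultimately have ej: "e \<le> j - 1" by linarith
  have "p ^ t dvd j * C" using jC by simp
  hence "t \<le> multiplicity p (j * C)"
    using C0 j0 p by (intro multiplicity_geI) (auto simp: prime_gt_1_nat)
  also have "multiplicity p (j * C) = e + multiplicity p C"
    unfolding e_def using C0 j0 p by (intro prime_elem_multiplicity_mult_distrib) auto
  finally have "t - (j - 1) \<le> multiplicity p C" using ej by linarith
  thus ?thesis unfolding C_def[symmetric] by (rule multiplicity_dvd')
qed

lemma binom_c_dvd:
  fixes p t j :: nat and c :: int
  assumes p: "prime p" and j1: "1 \<le> j" and jT: "j \<le> p ^ t"
    and c: "int p ^ (t + 1) dvd c"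
  shows "(int (p ^ t)) ^ j dvd int (p ^ t choose j) * c ^ (j - 1)"
proof -
  obtain u where u: "j = Suc u" using j1 by (cases j) auto
  have e: "t * j \<le> (t - (j - 1)) + (t + 1) * (j - 1)"
  proof (cases "u \<le> t")
    case True thus ?thesis by (simp add: u algebra_simps)
  next
    case False
    hence "t * j \<le> t * u + u" by (simp add: u algebra_simps)
    thus ?thesis by (simp add: u algebra_simps)
  qed
  have "(int (p ^ t)) ^ j = int p ^ (t * j)" by (simp add: power_mult)
  also have "\<dots> dvd int p ^ ((t - (j - 1)) + (t + 1) * (j - 1))"
    by (rule le_imp_power_dvd[OF e])
  also have "\<dots> = int p ^ (t - (j - 1)) * (int p ^ (t + 1)) ^ (j - 1)"
    by (simp add: power_add power_mult power_mult_distrib)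
  also have "\<dots> dvd int (p ^ t choose j) * c ^ (j - 1)"
  proof (rule mult_dvd_mono)
    have "p ^ (t - (j - 1)) dvd (p ^ t choose j)" by (rule binom_pdvd[OF p j1 jT])
    hence "int (p ^ (t - (j - 1))) dvd int (p ^ t choose j)" by (simp only: int_dvd_int_iff)
    thus "int p ^ (t - (j - 1)) dvd int (p ^ t choose j)" by simp
    show "(int p ^ (t + 1)) ^ (j - 1) dvd c ^ (j - 1)" using c by (rule dvd_power_same)
  qed
  finally show ?thesis .
qed

lemma delta_rel:
  fixes \<beta> :: complex and r m c :: int and T :: nat
  assumes T: "T > 0" and bT: "\<beta> ^ T = of_int m" and bne: "\<beta> \<noteq> of_int r"
    and c: "c = m - r ^ T"
    and dv: "\<And>j. 1 \<le> j \<Longrightarrow> j \<le> T \<Longrightarrow> int T ^ j dvd int (T choose j) * r ^ (T - j) * c ^ (j - 1)"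
    and h: "h = (\<Sum>i<T. of_int r ^ i * \<beta> ^ (T - 1 - i))"
  shows "\<exists>Q. (h / of_nat T) ^ T = (\<Sum>i<T. of_int (Q i) * (h / of_nat T) ^ i)"
proof -
  obtain T' where T': "T = Suc T'" using T by (cases T) auto
  define \<gamma> where "\<gamma> = \<beta> - of_int r"
  have g0: "\<gamma> \<noteq> 0" using bne by (simp add: \<gamma>_def)
  have "\<beta> ^ T - of_int r ^ T = \<gamma> * (\<Sum>i<T. of_int r ^ (T - Suc i) * \<beta> ^ i)"
    unfolding \<gamma>_def by (rule power_diff_sumr2)
  also have "(\<Sum>i<T. of_int r ^ (T - Suc i) * \<beta> ^ i) = (\<Sum>i<T. of_int r ^ i * \<beta> ^ (T - 1 - i))"
  proof -
    have "(\<Sum>i<T. of_int r ^ (T - Suc i) * \<beta> ^ i) =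
          (\<Sum>i<T. (\<lambda>i. of_int r ^ i * \<beta> ^ (T - 1 - i)) (T - Suc i))"
      by (rule sum.cong) (auto simp: Suc_diff_Suc)
    also have "\<dots> = (\<Sum>i<T. of_int r ^ i * \<beta> ^ (T - 1 - i))" by (rule sum.nat_diff_reindex)
    finally show ?thesis .
  qed
  finally have gh: "\<gamma> * h = of_int c" using bT c h by simp
  have "of_int m = (\<gamma> + of_int r) ^ T" using bT by (simp add: \<gamma>_def)
  also have "\<dots> = (\<Sum>k\<le>T. of_nat (T choose k) * \<gamma> ^ k * of_int r ^ (T - k))"
    by (rule binomial_ring)
  also have "\<dots> = of_int r ^ T + (\<Sum>i\<le>T'. of_nat (T choose Suc i) * \<gamma> ^ Suc i * of_int r ^ (T' - i))"
    unfolding T' by (subst sum.atMost_Suc_shift) simp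
  finally have "of_int c = \<gamma> * (\<Sum>i\<le>T'. of_nat (T choose Suc i) * \<gamma> ^ i * of_int r ^ (T' - i))"
    using c by (simp add: sum_distrib_left mult_ac)
  define S where "S = (\<Sum>i\<le>T'. of_nat (T choose Suc i) * \<gamma> ^ i * of_int r ^ (T' - i))"
  from this[symmetric] \<open>of_int c = _\<close> gh g0 have hS: "h = S"
    by simp
  define A where "A = (\<lambda>i. (int (T choose Suc i) * r ^ (T' - i) * c ^ i) div int T ^ Suc i)"
  have A: "of_int (A i) * of_nat T ^ Suc i = (of_nat (T choose Suc i) * of_int r ^ (T' - i) * of_int c ^ i :: complex)"
    if "i \<le> T'" for i
  proof -
    have "int T ^ Suc i dvd int (T choose Suc i) * r ^ (T - Suc i) * c ^ (Suc i - 1)"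
      using that T' by (intro dv) auto
    hence "int T ^ Suc i dvd int (T choose Suc i) * r ^ (T' - i) * c ^ i" using T' by simp
    hence "A i * int T ^ Suc i = int (T choose Suc i) * r ^ (T' - i) * c ^ i"
      unfolding A_def by simp
    hence "(of_int (A i * int T ^ Suc i) :: complex) = of_int (int (T choose Suc i) * r ^ (T' - i) * c ^ i)"
      by (rule arg_cong)
    thus ?thesis by simp
  qed
  define \<delta> where "\<delta> = h / of_nat T"
  have Tn0: "(of_nat T :: complex) \<noteq> 0" using T by simp
  have "h ^ T = h ^ T' * h" by (simp add: T')
  also have "\<dots> = h ^ T' * S" using hS by simp
  also have "\<dots> = (\<Sum>i\<le>T'. h ^ T' * (of_nat (T choose Suc i) * \<gamma> ^ i * of_int r ^ (T' - i)))"
    by (simp add: S_def sum_distrib_left)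
  also have "\<dots> = (\<Sum>i\<le>T'. of_nat (T choose Suc i) * of_int r ^ (T' - i) * (\<gamma> * h) ^ i * h ^ (T' - i))"
  proof (rule sum.cong)
    fix i assume "i \<in> {..T'}"
    hence "h ^ T' = h ^ i * h ^ (T' - i)" by (simp add: power_add[symmetric])
    thus "h ^ T' * (of_nat (T choose Suc i) * \<gamma> ^ i * of_int r ^ (T' - i)) =
          of_nat (T choose Suc i) * of_int r ^ (T' - i) * (\<gamma> * h) ^ i * h ^ (T' - i)"
      by (simp add: power_mult_distrib mult_ac)
  qed simp
  also have "\<dots> = (\<Sum>i\<le>T'. of_int (A i) * of_nat T ^ Suc i * h ^ (T' - i))"
  proof (rule sum.cong)
    fix i assume "i \<in> {..T'}"
    hence a: "of_int (A i) * of_nat T ^ Suc i = (of_nat (T choose Suc i) * of_int r ^ (T' - i) * of_int c ^ i :: complex)"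
      by (intro A) simp
    show "of_nat (T choose Suc i) * of_int r ^ (T' - i) * (\<gamma> * h) ^ i * h ^ (T' - i) =
          of_int (A i) * of_nat T ^ Suc i * h ^ (T' - i)"
      by (simp only: gh a)
  qed simp
  finally have hT: "h ^ T = (\<Sum>i\<le>T'. of_int (A i) * of_nat T ^ Suc i * h ^ (T' - i))" .
  have "\<delta> ^ T = h ^ T / of_nat T ^ T" by (simp add: \<delta>_def power_divide)
  also have "\<dots> = (\<Sum>i\<le>T'. of_int (A i) * \<delta> ^ (T' - i))"
  proof -
    have "of_int (A i) * of_nat T ^ Suc i * h ^ (T' - i) / of_nat T ^ T = of_int (A i) * \<delta> ^ (T' - i)"
      if "i \<le> T'" for i
    proof -
      have "(of_nat T :: complex) ^ T = of_nat T ^ Suc i * of_nat T ^ (T' - i)"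
        using that by (simp add: T' power_add[symmetric])
      thus ?thesis using Tn0 by (simp add: \<delta>_def power_divide)
    qed
    thus ?thesis unfolding hT sum_divide_distrib by (intro sum.cong) auto
  qed
  also have "\<dots> = (\<Sum>i<T. of_int (A i) * \<delta> ^ (T' - i))"
    by (simp add: T' lessThan_Suc_atMost)
  also have "\<dots> = (\<Sum>i<T. (\<lambda>i. of_int (A i) * \<delta> ^ (T' - i)) (T - Suc i))"
    by (rule sum.nat_diff_reindex[symmetric])
  also have "\<dots> = (\<Sum>i<T. of_int (A (T' - i)) * \<delta> ^ i)"
    by (rule sum.cong) (auto simp: T')
  finally show ?thesis unfolding \<delta>_def by (intro exI[of _ "\<lambda>i. A (T' - i)"])
qed




lemma deg_binom:
  fixes c :: "'a::idom"
  assumes n: "n > 0"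
  shows "degree (Polynomial.monom 1 n - [:c:]) = n" "lead_coeff (Polynomial.monom 1 n - [:c:]) = 1"
proof -
  have e: "Polynomial.monom 1 n + [:-c:] = Polynomial.monom 1 n - [:c:]" by simp
  have d: "degree [:-c:] < degree (Polynomial.monom (1::'a) n)" using n by (simp add: degree_monom_eq)
  have dd: "degree (Polynomial.monom 1 n - [:c:]) = n"
    unfolding e[symmetric] by (subst degree_add_eq_left[OF d]) (simp add: degree_monom_eq)
  thus "degree (Polynomial.monom 1 n - [:c:]) = n" .
  have "coeff [:c:] n = 0" using n by (cases n) auto
  thus "lead_coeff (Polynomial.monom 1 n - [:c:]) = 1" unfolding dd using n by (simp add: coeff_monom)
qed

lemma eis_aux:
  fixes g h :: "int poly" and m l :: int and n :: nat
  assumes gh: "g * h = Polynomial.monom 1 n - [:m:]"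
    and l: "prime l" and lg0: "l dvd coeff g 0" and lh0: "\<not> l dvd coeff h 0"
    and dg: "degree g > 0" and dh: "degree h > 0"
  shows False
proof -
  have g0: "g \<noteq> 0" and h0: "h \<noteq> 0" using dg dh by auto
  have n: "n = degree g + degree h"
  proof -
    have "degree (g * h) = degree g + degree h" using g0 h0 by (rule degree_mult_eq)
    moreover have "n > 0" 
    proof (rule ccontr)
      assume "\<not> n > 0" hence "n = 0" by simp
      have "degree ((1::int poly) - [:m:]) \<le> 0" by (rule degree_diff_le) simp_all
      hence "degree (g * h) = 0" using gh \<open>n = 0\<close> by (simp add: monom_0)
      thus False using g0 h0 dg by (simp add: degree_mult_eq)
    qed
    hence "degree (Polynomial.monom (1::int) n - [:m:]) = n"
      by (rule deg_binom)
    ultimately show ?thesis using gh by simp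
  qed
  have "lead_coeff (g * h) = lead_coeff (Polynomial.monom (1::int) n - [:m:])" using gh by simp
  also have "\<dots> = 1" using n dg by (intro deg_binom) simp
  finally have "lead_coeff g * lead_coeff h = 1" by (simp add: lead_coeff_mult)
  hence "\<not> l dvd lead_coeff g" using l
    by (metis dvd_mult2 not_prime_unit)
  define i where "i = (LEAST i. \<not> l dvd coeff g i)"
  have ex: "\<exists>i. \<not> l dvd coeff g i" using \<open>\<not> l dvd lead_coeff g\<close> by blast
  have i1: "\<not> l dvd coeff g i" unfolding i_def by (rule LeastI_ex[OF ex])
  have i2: "l dvd coeff g a" if "a < i" for a using not_less_Least[OF that[unfolded i_def]] by blast
  have ile: "i \<le> degree g" unfolding i_def using \<open>\<not> l dvd lead_coeff g\<close> by (rule Least_le)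
  have ipos: "i > 0" using i1 lg0 by (cases i) auto
  have "coeff (g * h) i = (\<Sum>a\<le>i. coeff g a * coeff h (i - a))" by (rule coeff_mult)
  also have "\<dots> = (\<Sum>a<i. coeff g a * coeff h (i - a)) + coeff g i * coeff h 0"
    by (simp add: lessThan_Suc_atMost[symmetric])
  finally have eq: "coeff (g * h) i = (\<Sum>a<i. coeff g a * coeff h (i - a)) + coeff g i * coeff h 0" .
  have "coeff [:m:] i = 0" using ipos by (cases i) auto
  hence "coeff (g * h) i = 0" using gh ipos ile n dh by (auto simp: coeff_monom)
  moreover have "l dvd (\<Sum>a<i. coeff g a * coeff h (i - a))"
    by (rule dvd_sum) (use i2 in auto)
  ultimately have "l dvd coeff g i * coeff h 0" using eq
    by (metis add.commute dvd_add_right_iff dvd_0_right)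
  thus False using l i1 lh0 by (simp add: prime_dvd_mult_iff)
qed

lemma eisenstein_binom:
  fixes g h :: "int poly" and m :: int and n :: nat
  assumes gh: "g * h = Polynomial.monom 1 n - [:m:]"
    and sq: "squarefree m" and m1: "m \<noteq> 1" and m2: "m \<noteq> -1"
    and dg: "degree g > 0" and dh: "degree h > 0"
  shows False
proof -
  have m0: "m \<noteq> 0"
  proof
    assume "m = 0"
    hence "is_unit (2::int)" using sq unfolding squarefree_def by simp
    thus False by simp
  qed
  have "\<not> is_unit m" using m1 m2 by (auto simp: zdvd1_eq abs_if split: if_splits)
  then obtain l where ldvd: "l dvd m" and l: "prime l" using prime_divisor_exists[OF m0] by blast
  have nl2: "\<not> l ^ 2 dvd m" using sq l unfolding squarefree_def by (auto simp: not_prime_unit)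
  have g0: "g \<noteq> 0" and h0: "h \<noteq> 0" using dg dh by auto
  have n0: "n > 0"
  proof (rule ccontr)
    assume "\<not> n > 0" hence "n = 0" by simp
    have "degree ((1::int poly) - [:m:]) \<le> 0" by (rule degree_diff_le) simp_all
    hence "degree (g * h) = 0" using gh \<open>n = 0\<close> by (simp add: monom_0)
    thus False using g0 h0 dg by (simp add: degree_mult_eq)
  qed
  have "coeff (g * h) 0 = - m" using gh n0 by (auto simp: coeff_monom)
  hence prod: "coeff g 0 * coeff h 0 = - m" by (simp add: coeff_mult_0)
  hence ld: "l dvd coeff g 0 * coeff h 0" using ldvd by simp
  show False
  proof (cases "l dvd coeff g 0")
    case True
    have "\<not> l dvd coeff h 0"
    proof
      assume "l dvd coeff h 0"
      with True have "l * l dvd coeff g 0 * coeff h 0" by (rule mult_dvd_mono)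
      hence "l ^ 2 dvd m" using prod by (simp add: power2_eq_square)
      thus False using nl2 by simp
    qed
    thus False using eis_aux[OF gh l True _ dg dh] by blast
  next
    case False
    hence lh: "l dvd coeff h 0" using ld l by (simp add: prime_dvd_mult_iff)
    have gh': "h * g = Polynomial.monom 1 n - [:m:]" using gh by (simp add: mult.commute)
    show False using eis_aux[OF gh' l lh False dh dg] .
  qed
qed

lemma no_small_root:
  fixes m :: int and n :: nat and \<alpha> :: complex and q :: "rat poly"
  assumes sq: "squarefree m" and m1: "m \<noteq> 1" and m2: "m \<noteq> -1"
    and an: "\<alpha> ^ n = of_int m"
    and q0: "q \<noteq> 0" and dq: "degree q < n"
    and qa: "poly (map_poly of_rat q) \<alpha> = 0"
  shows False
proof -
  interpret Rq: map_poly_comm_ring_hom "of_rat :: rat \<Rightarrow> complex" ..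
  define f :: "int poly" where "f = Polynomial.monom 1 n - [:m:]"
  define fQ :: "rat poly" where "fQ = map_poly of_int f"
  have fQa: "poly (map_poly of_rat fQ) \<alpha> = 0"
  proof -
    have "map_poly (of_rat :: rat \<Rightarrow> complex) fQ = map_poly of_int f"
      unfolding fQ_def by (subst map_poly_map_poly) (auto simp: o_def)
    also have "\<dots> = Polynomial.monom 1 n - [:of_int m:]" unfolding f_def by (simp add: hom_distribs)
    finally show ?thesis using an by (simp add: poly_monom)
  qed
  define g where "g = gcd fQ q"
  obtain u v where uv: "u * fQ + v * q = g"
    using bezout_coefficients_fst_snd[of fQ q] unfolding g_def by blast
  have ga: "poly (map_poly of_rat g) \<alpha> = 0"
    unfolding uv[symmetric] using fQa qa by (simp add: Rq.hom_add Rq.hom_mult)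
  have g0: "g \<noteq> 0" using q0 by (simp add: g_def)
  have "g dvd q" by (simp add: g_def)
  hence dgq: "degree g \<le> degree q" using q0 by (rule dvd_imp_degree_le)
  have dg: "degree g > 0"
  proof (rule ccontr)
    assume "\<not> degree g > 0"
    then obtain a where "g = [:a:]" by (metis degree_eq_zeroE neq0_conv)
    with g0 ga show False by simp
  qed
  have "g dvd fQ" by (simp add: g_def)
  then obtain w where w: "fQ = g * w" by (elim dvdE)
  have n0: "n > 0" using dq by simp
  have fQe: "fQ = Polynomial.monom 1 n - [:of_int m:]" unfolding fQ_def f_def
    by (rule poly_eqI) (auto simp: coeff_map_poly coeff_monom coeff_pCons split: nat.split)
  have dfQ: "degree fQ = n" unfolding fQe using n0 by (rule deg_binom)
  have w0: "w \<noteq> 0" using w dfQ n0 by auto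
  have "degree fQ = degree g + degree w" using w g0 w0 by (simp add: degree_mult_eq)
  hence dw: "degree w > 0" using dfQ dgq dq by linarith
  have "map_poly rat_of_int f = g * w" using w fQ_def by simp
  from rat_to_int_factor[OF this] obtain g' h' where
    fgh: "f = g' * h'" and dg': "degree g' = degree g" and dh': "degree h' = degree w" by blast
  have gh': "g' * h' = Polynomial.monom 1 n - [:m:]" using fgh unfolding f_def by (rule sym)
  show False
    by (rule eisenstein_binom[OF gh' sq m1 m2]) (simp_all only: dg' dh' dg dw)
qed





lemma telescope_card:
  fixes p k s :: nat
  assumes p: "p > 0" and sk: "s \<le> k"
  shows "(\<Sum>t\<in>{..<s}. p^(k-t) - p^(k-t-1)) + p^(k-s) = p^k"
  using sk
proof (induction s)
  case 0 thus ?case by simp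
next
  case (Suc s)
  have le: "p^(k - s - 1) \<le> p^(k-s)" using p by (intro power_increasing) auto
  have "(\<Sum>t\<in>{..<Suc s}. p^(k-t) - p^(k-t-1)) + p^(k - Suc s) =
        (\<Sum>t\<in>{..<s}. p^(k-t) - p^(k-t-1)) + (p^(k-s) - p^(k-s-1)) + p^(k-s-1)" by simp
  also have "\<dots> = (\<Sum>t\<in>{..<s}. p^(k-t) - p^(k-t-1)) + p^(k-s)" using le by simp
  also have "\<dots> = p^k" using Suc by simp
  finally show ?case .
qed

lemma card_basis_index:
  fixes p k s :: nat
  assumes p: "p > 0" and sk: "s \<le> k"
  shows "card (basis_index p k s) = p^k"
proof -
  have eq: "basis_index p k s = (SIGMA t:{..<s}. {..<p^(k-t) - p^(k-t-1)}) \<union> ({s} \<times> {..<p^(k-s)})"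
    unfolding basis_index_def by auto
  have "card (basis_index p k s) = card (SIGMA t:{..<s}. {..<p^(k-t) - p^(k-t-1)}) + card ({s} \<times> {..<p^(k-s)})"
    unfolding eq by (rule card_Un_disjoint) auto
  also have "card (SIGMA t:{..<s}. {..<p^(k-t) - p^(k-t-1)}) = (\<Sum>t\<in>{..<s}. p^(k-t) - p^(k-t-1))"
    by (subst card_SigmaI) auto
  also have "card ({s} \<times> {..<p^(k-s)}) = p^(k-s)" by (simp add: card_cartesian_product)
  finally show ?thesis using telescope_card[OF p sk] by simp
qed




definition Dg :: "nat \<Rightarrow> nat \<Rightarrow> nat \<times> nat \<Rightarrow> nat" where
  "Dg p k tj = (case tj of (t,j) \<Rightarrow> p^k - p^(k-t) + j)"

lemma arith1: "(j::nat) < A - B \<Longrightarrow> A \<le> P \<Longrightarrow> B \<le> A \<Longrightarrow> P - A + j < P - B"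
  by linarith

lemma arith2: "(j::nat) < A \<Longrightarrow> A \<le> P \<Longrightarrow> P - A + j < P"
  by linarith

lemma arith3: "(Da::nat) < P - C \<Longrightarrow> E \<le> C \<Longrightarrow> P - E \<le> Db \<Longrightarrow> Da = Db \<Longrightarrow> False"
  by linarith

lemma arith4: "(Z::nat) = A + Y \<Longrightarrow> Z \<le> P \<Longrightarrow> 0 < Y \<Longrightarrow> P - Z < P - A"
  by linarith

lemma arith5: "(e::nat) < P - A \<Longrightarrow> A \<le> P \<Longrightarrow> P - A + j \<noteq> j + e"
  by linarith

lemma arith6: "(e::nat) \<le> P - A \<Longrightarrow> j + e \<le> P - A + j"
  by linarith

lemma basis_index_mem:
  "(t,j) \<in> basis_index p k s \<longleftrightarrow> (t < s \<and> j < p^(k-t) - p^(k-t-1)) \<or> (t = s \<and> j < p^(k-s))"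
  unfolding basis_index_def by blast

lemma Dg_bounds:
  fixes p k s t j :: nat
  assumes p: "p > 0" and sk: "s < k" and tj: "(t,j) \<in> basis_index p k s"
  shows "t \<le> s" "p^k - p^(k-t) \<le> Dg p k (t,j)"
    "t < s \<Longrightarrow> Dg p k (t,j) < p^k - p^(k-t-1)" "Dg p k (t,j) < p^k"
proof -
  note mem = tj[unfolded basis_index_mem]
  show ts: "t \<le> s" using mem by (elim disjE conjE) simp_all
  have a1: "p^(k-t) \<le> p^k" using p by (intro power_increasing) auto
  have a2: "p^(k-t-1) \<le> p^(k-t)" using p by (intro power_increasing) auto
  show "p^k - p^(k-t) \<le> Dg p k (t,j)" by (simp add: Dg_def)
  show lt: "Dg p k (t,j) < p^k - p^(k-t-1)" if "t < s"
  proof -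
    have "j < p^(k-t) - p^(k-t-1)" using mem that by (elim disjE conjE) simp_all
    moreover have "Dg p k (t,j) = p^k - p^(k-t) + j" by (simp add: Dg_def)
    ultimately show ?thesis using arith1[OF _ a1 a2] by simp
  qed
  show "Dg p k (t,j) < p^k"
  proof (cases "t < s")
    case True thus ?thesis using lt[OF True] by simp
  next
    case False
    hence "t = s" using ts by simp
    hence "j < p^(k-t)" using mem False by (elim disjE conjE) simp_all
    moreover have "Dg p k (t,j) = p^k - p^(k-t) + j" by (simp add: Dg_def)
    ultimately show ?thesis using arith2[OF _ a1] by simp
  qed
qed


lemma Dg_inj:
  fixes p k s :: nat
  assumes p: "p > 0" and sk: "s < k"
  shows "inj_on (Dg p k) (basis_index p k s)"
proof (rule inj_onI)
  fix x y assume x: "x \<in> basis_index p k s" and y: "y \<in> basis_index p k s" and eq: "Dg p k x = Dg p k y"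
  obtain t1 j1 where x': "x = (t1,j1)" by (cases x)
  obtain t2 j2 where y': "y = (t2,j2)" by (cases y)
  have lt: False if "a \<in> basis_index p k s" "b \<in> basis_index p k s" "a = (ta,ja)" "b = (tb,jb)" "ta < tb"
     "Dg p k a = Dg p k b" for a b ta ja tb jb
  proof -
    have "tb \<le> s" using Dg_bounds(1)[OF p sk, of tb jb] that by auto
    hence "ta < s" using that by simp
    hence "Dg p k (ta,ja) < p^k - p^(k-ta-1)" using Dg_bounds(3)[OF p sk, of ta ja] that by auto
    moreover have "p^(k-tb) \<le> p^(k-ta-1)" using p that by (intro power_increasing) auto
    moreover have "p^k - p^(k-tb) \<le> Dg p k (tb,jb)" using Dg_bounds(2)[OF p sk, of tb jb] that by auto
    moreover have "Dg p k (ta,ja) = Dg p k (tb,jb)" using that by simp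
    ultimately show False by (rule arith3)
  qed
  have "t1 = t2"
  proof (rule ccontr)
    assume ne: "t1 \<noteq> t2"
    show False
    proof (cases "t1 < t2")
      case True show False by (rule lt[OF x y x' y' True eq])
    next
      case False hence lt21: "t2 < t1" using ne by simp
      show False by (rule lt[OF y x y' x' lt21 eq[symmetric]])
    qed
  qed
  thus "x = y" using eq x' y' by (simp add: Dg_def)
qed


lemma coeff_Pg:
  fixes r :: int and p k t j l :: nat
  shows "coeff (Polynomial.monom 1 j * h_poly r p k t) l =
         (\<Sum>i<p^t. if l = j + (p^k - (i+1) * p^(k-t)) then r^i else 0)"
  unfolding h_poly_def sum_distrib_left coeff_sum
  by (rule sum.cong) (auto simp: mult_monom coeff_monom)

lemma coeff_Pg_top:
  fixes r :: int and p k t j :: nat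
  assumes p: "p > 0" and tk: "t \<le> k"
  shows "coeff (Polynomial.monom 1 j * h_poly r p k t) (Dg p k (t,j)) = 1"
    "\<And>l. l > Dg p k (t,j) \<Longrightarrow> coeff (Polynomial.monom 1 j * h_poly r p k t) l = 0"
proof -
  have pk: "p^k = p^t * p^(k-t)" using tk by (simp add: power_add[symmetric])
  have pos: "p^(k-t) > 0" using p by simp
  have ei: "p^k - (i+1) * p^(k-t) \<le> p^k - p^(k-t)" for i
    by (intro diff_le_mono2) simp
  have ei2: "p^k - (i+1) * p^(k-t) < p^k - p^(k-t)" if "0 < i" "i < p^t" for i
  proof -
    have "(i+1) * p^(k-t) \<le> p^t * p^(k-t)" using that by (intro mult_le_mono1) simp
    hence le: "(i+1) * p^(k-t) \<le> p^k" using pk by simp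
    have "i * p^(k-t) > 0" using that pos by simp
    moreover have "(i+1) * p^(k-t) = p^(k-t) + i * p^(k-t)" by simp
    ultimately show ?thesis using arith4 le by blast
  qed
  show "coeff (Polynomial.monom 1 j * h_poly r p k t) (Dg p k (t,j)) = 1"
  proof -
    have "coeff (Polynomial.monom 1 j * h_poly r p k t) (Dg p k (t,j)) =
          (\<Sum>i<p^t. if i = 0 then 1 else 0)"
      unfolding coeff_Pg
    proof (rule sum.cong)
      fix i assume i: "i \<in> {..<p^t}"
      show "(if Dg p k (t, j) = j + (p^k - (i+1) * p^(k-t)) then r^i else 0) = (if i = 0 then 1 else 0)"
      proof (cases "i = 0")
        case True thus ?thesis by (simp add: Dg_def)
      next
        case False
        have a1: "p^(k-t) \<le> p^k" using p by (intro power_increasing) auto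
        have ea: "p^k - (i+1) * p^(k-t) < p^k - p^(k-t)" using ei2[of i] i False by simp
        have dg: "Dg p k (t,j) = p^k - p^(k-t) + j" by (simp only: Dg_def prod.case)
        have "Dg p k (t,j) \<noteq> j + (p^k - (i+1) * p^(k-t))" unfolding dg by (rule arith5[OF ea a1])
        thus ?thesis using False by simp
      qed
    qed simp
    also have "\<dots> = 1" using p by simp
    finally show ?thesis .
  qed
  fix l assume l: "l > Dg p k (t,j)"
  show "coeff (Polynomial.monom 1 j * h_poly r p k t) l = 0"
    unfolding coeff_Pg
  proof (rule sum.neutral, intro ballI)
    fix i assume "i \<in> {..<p^t}"
    have "j + (p^k - (i+1) * p^(k-t)) \<le> p^k - p^(k-t) + j" using ei[of i] by (rule arith6)
    hence "j + (p^k - (i+1) * p^(k-t)) \<le> Dg p k (t,j)" by (simp add: Dg_def)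
    thus "(if l = j + (p^k - (i+1) * p^(k-t)) then r^i else 0) = 0" using l by auto
  qed
qed

lemma poly_h:
  fixes r :: int and p k t :: nat and \<alpha> :: complex
  assumes tk: "t \<le> k"
  shows "poly (map_poly of_int (h_poly r p k t)) \<alpha> =
         (\<Sum>i<p^t. of_int r ^ i * (\<alpha> ^ (p^(k-t))) ^ (p^t - 1 - i))"
proof -
  have pk: "p^k = p^(k-t) * p^t" using tk by (simp add: power_add[symmetric])
  have "map_poly of_int (h_poly r p k t) = (\<Sum>i<p^t. Polynomial.monom (of_int (r^i)) (p^k - (i+1) * p^(k-t)) :: complex poly)"
    unfolding h_poly_def by (simp add: of_int_poly_hom.hom_sum map_poly_monom)
  hence "poly (map_poly of_int (h_poly r p k t)) \<alpha> = (\<Sum>i<p^t. of_int (r^i) * \<alpha> ^ (p^k - (i+1) * p^(k-t)))"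
    by (simp add: poly_sum poly_monom)
  also have "\<dots> = (\<Sum>i<p^t. of_int r ^ i * (\<alpha> ^ (p^(k-t))) ^ (p^t - 1 - i))"
  proof (rule sum.cong)
    fix i assume "i \<in> {..<p^t}"
    hence "p^k - (i+1) * p^(k-t) = p^(k-t) * (p^t - 1 - i)"
      unfolding pk by (simp add: diff_mult_distrib2 mult.commute)
    thus "of_int (r^i) * \<alpha> ^ (p^k - (i+1) * p^(k-t)) = of_int r ^ i * (\<alpha> ^ (p^(k-t))) ^ (p^t - 1 - i)"
      by (simp add: power_mult)
  qed simp
  finally show ?thesis .
qed



lemma cong_part:
  fixes m r :: int and p k s t :: nat
  assumes p: "prime p" and r: "r = m mod (int p)^(k+1)"
    and s: "s = multiplicity (int p) (m^p - m) - 1"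
    and ts: "t \<le> s" and sk: "s < k" and mpm: "m^p - m \<noteq> 0"
  shows "(int p)^(t+1) dvd m - r^(p^t)"
proof -
  define P where "P = (int p)^(k+1)"
  have rm: "r mod P = m mod P" using r by (simp add: P_def)
  have "r^(p^t) mod P = (r mod P)^(p^t) mod P" by (simp add: power_mod)
  also have "\<dots> = (m mod P)^(p^t) mod P" by (simp only: rm)
  also have "\<dots> = m^(p^t) mod P" by (simp add: power_mod)
  finally have rP: "r^(p^t) mod P = m^(p^t) mod P" .
  have dvP: "(int p)^(t+1) dvd P" unfolding P_def using ts sk by (intro le_imp_power_dvd) simp
  have A: "r^(p^t) mod (int p)^(t+1) = m^(p^t) mod (int p)^(t+1)"
    using rP mod_mod_cancel[OF dvP, of "r^(p^t)"] mod_mod_cancel[OF dvP, of "m^(p^t)"] by simp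
  have B: "m^(p^t) mod (int p)^(t+1) = m mod (int p)^(t+1)"
  proof (cases "t = 0")
    case True thus ?thesis by simp
  next
    case False
    hence s1: "s \<ge> 1" using ts by simp
    have mult: "multiplicity (int p) (m^p - m) = s + 1" using s s1 by simp
    define Q where "Q = (int p)^(s+1)"
    have "Q dvd m^p - m" unfolding Q_def mult[symmetric] by (rule multiplicity_dvd)
    hence mQ: "m^p mod Q = m mod Q" by (simp add: mod_eq_dvd_iff)
    have ind: "m^(p^u) mod Q = m mod Q" for u
    proof (induction u)
      case 0 thus ?case by simp
    next
      case (Suc u)
      have "m^(p^Suc u) = (m^(p^u))^p" by (simp add: power_mult[symmetric] mult.commute)
      hence "m^(p^Suc u) mod Q = ((m^(p^u)) mod Q)^p mod Q" by (simp add: power_mod)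
      also have "\<dots> = (m mod Q)^p mod Q" by (simp only: Suc.IH)
      also have "\<dots> = m mod Q" using mQ by (simp add: power_mod)
      finally show ?case .
    qed
    have dvQ: "(int p)^(t+1) dvd Q" unfolding Q_def using ts by (intro le_imp_power_dvd) simp
    show ?thesis using ind[of t] mod_mod_cancel[OF dvQ, of "m^(p^t)"] mod_mod_cancel[OF dvQ, of m] by simp
  qed
  have "m mod (int p)^(t+1) = r^(p^t) mod (int p)^(t+1)" using A B by simp
  thus ?thesis by (simp add: mod_eq_dvd_iff)
qed

theorem corollary3p2:
  fixes m :: int and p k s :: nat and r :: int and \<alpha> :: complex
  assumes "squarefree m" and "m \<noteq> 1" and "m \<noteq> -1"
    and "prime p" and "k > 0"
    and "\<alpha> ^ (p^k) = of_int m"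
    and "r = m mod (int p)^(k+1)"
    and "s = multiplicity (int p) (m^p - m) - 1"
    and "s < k"
  shows "card (basis_index p k s) = p^k
     \<and> (\<forall>tj\<in>basis_index p k s. algebraic_int (basis_elem r p k \<alpha> tj))
     \<and> (\<forall>c :: nat \<times> nat \<Rightarrow> complex.
          (\<forall>tj\<in>basis_index p k s. c tj \<in> \<rat>) \<and>
          (\<Sum>tj\<in>basis_index p k s. c tj * basis_elem r p k \<alpha> tj) = 0
          \<longrightarrow> (\<forall>tj\<in>basis_index p k s. c tj = 0))"
proof -
  note sq = assms(1) and m1 = assms(2) and m2 = assms(3) and p = assms(4) and k0 = assms(5)
    and apk = assms(6) and r = assms(7) and s = assms(8) and sk = assms(9)
  define I where "I = basis_index p k s"
  have p0: "p > 0" using p by (simp add: prime_gt_0_nat)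
  have p2: "p \<ge> 2" using p by (rule prime_ge_2_nat)
  have m0: "m \<noteq> 0"
  proof
    assume "m = 0"
    hence "is_unit (2::int)" using sq unfolding squarefree_def by simp
    thus False by simp
  qed
  have mpm: "m^p - m \<noteq> 0"
  proof
    assume "m^p - m = 0"
    hence e1: "m^p = m" by simp
    have "m^p = m * m^(p-1)" using p0 by (cases p) simp_all
    hence "m * m^(p-1) = m * 1" using e1 by simp
    hence "m^(p-1) = 1" using m0 by simp
    moreover have "m dvd m^(p-1)" using p2 by (intro dvd_power) simp
    ultimately have "is_unit m" by simp
    thus False using m1 m2 by (auto simp: zdvd1_eq abs_if split: if_splits)
  qed
  have fin: "finite I"
  proof -
    have "I \<subseteq> {..s} \<times> {..<p^k}" unfolding I_def
    proof
      fix x assume x: "x \<in> basis_index p k s"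
      obtain t j where x': "x = (t,j)" by (cases x)
      have "t \<le> s" and dl: "Dg p k (t,j) < p^k" using Dg_bounds(1,4)[OF p0 sk] x x' by auto
      have jl: "j \<le> Dg p k (t,j)" by (simp only: Dg_def prod.case le_add2)
      have "j < p^k" using le_less_trans[OF jl dl] .
      thus "x \<in> {..s} \<times> {..<p^k}" using \<open>t \<le> s\<close> x' by simp
    qed
    thus ?thesis by (rule finite_subset) simp
  qed
  have part1: "card (basis_index p k s) = p^k"
    using card_basis_index[OF p0] sk by simp
  have xd: "\<alpha> ^ (p^k) = (\<Sum>i<p^k. of_int (if i = 0 then m else 0) * \<alpha> ^ i)"
  proof -
    have "(\<Sum>i<p^k. of_int (if i = 0 then m else 0) * \<alpha> ^ i) = (\<Sum>i<p^k. if i = 0 then of_int m else 0)"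
      by (rule sum.cong) auto
    also have "\<dots> = of_int m" using p0 by simp
    finally show ?thesis using apk by simp
  qed
  have pk0: "p^k > 0" using p0 by simp
  have part2: "\<forall>tj\<in>basis_index p k s. algebraic_int (basis_elem r p k \<alpha> tj)"
  proof
    fix tj assume tj: "tj \<in> basis_index p k s"
    obtain t j where tj': "tj = (t,j)" by (cases tj)
    have ts: "t \<le> s" using Dg_bounds(1)[OF p0 sk] tj tj' by auto
    hence tk: "t \<le> k" using sk by simp
    define T where "T = p^t"
    define \<beta> where "\<beta> = \<alpha> ^ (p^(k-t))"
    define H where "H = poly (map_poly of_int (h_poly r p k t)) \<alpha>"
    have HH: "H = (\<Sum>i<T. of_int r ^ i * \<beta> ^ (T - 1 - i))"
      unfolding H_def T_def \<beta>_def by (rule poly_h[OF tk])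
    have be: "basis_elem r p k \<alpha> tj = \<alpha> ^ j * (H / of_nat T) ^ 1"
      unfolding tj' basis_elem_def H_def T_def by simp
    show "algebraic_int (basis_elem r p k \<alpha> tj)"
    proof (cases "t = 0")
      case True
      have "H = 1" unfolding HH T_def True by simp
      hence "basis_elem r p k \<alpha> tj = \<alpha> ^ j * 1 ^ 0" using be True T_def by simp
      also have "algebraic_int \<dots>"
        by (rule alg_int_pow_prod[OF pk0 _ xd, of 1 1 "\<lambda>_. 1"]) simp_all
      finally show ?thesis .
    next
      case False
      have T0: "T > 0" using p0 by (simp add: T_def)
      have T2: "T \<ge> 2"
      proof -
        have "p^1 \<le> p^t" using False p0 by (intro power_increasing) auto
        thus ?thesis using p2 by (simp add: T_def)
      qed
      have pkT: "p^k = p^(k-t) * T" using tk by (simp add: T_def power_add[symmetric])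
      have bT: "\<beta> ^ T = of_int m" unfolding \<beta>_def using apk pkT by (simp add: power_mult)
      have bne: "\<beta> \<noteq> of_int r"
      proof
        assume "\<beta> = of_int r"
        hence "(of_int m :: complex) = of_int (r ^ T)" using bT by simp
        hence mr: "m = r ^ T" by (simp only: of_int_eq_iff)
        have "r^2 dvd r^T" using T2 by (rule le_imp_power_dvd)
        hence u: "is_unit r" using sq mr unfolding squarefree_def by simp
        have "is_unit (r ^ T)" by (subst is_unit_power_iff) (rule disjI1, rule u)
        hence "is_unit m" using mr by (simp only:)
        thus False using m1 m2 by (auto simp: zdvd1_eq abs_if split: if_splits)
      qed
      define c where "c = m - r ^ T"
      have cd: "(int p)^(t+1) dvd c"
        unfolding c_def T_def by (rule cong_part[OF p r s ts sk mpm])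
      have dv: "int T ^ j' dvd int (T choose j') * r ^ (T - j') * c ^ (j' - 1)"
        if "1 \<le> j'" "j' \<le> T" for j'
      proof -
        have "(int (p ^ t)) ^ j' dvd int (p ^ t choose j') * c ^ (j' - 1)"
          using binom_c_dvd[OF p that(1) _ cd] that(2) by (simp add: T_def)
        hence "int T ^ j' dvd int (T choose j') * c ^ (j' - 1) * r ^ (T - j')"
          unfolding T_def by (rule dvd_mult2)
        thus ?thesis by (simp add: mult_ac)
      qed
      obtain Q where Q: "(H / of_nat T) ^ T = (\<Sum>i<T. of_int (Q i) * (H / of_nat T) ^ i)"
        using delta_rel[OF T0 bT bne c_def dv HH] by blast
      have "algebraic_int (\<alpha> ^ j * (H / of_nat T) ^ 1)"
        by (rule alg_int_pow_prod[OF pk0 T0 xd Q])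
      thus ?thesis using be by simp
    qed
  qed
  have part3: "\<forall>c :: nat \<times> nat \<Rightarrow> complex.
          (\<forall>tj\<in>basis_index p k s. c tj \<in> \<rat>) \<and>
          (\<Sum>tj\<in>basis_index p k s. c tj * basis_elem r p k \<alpha> tj) = 0
          \<longrightarrow> (\<forall>tj\<in>basis_index p k s. c tj = 0)"
  proof (intro allI impI)
    fix c :: "nat \<times> nat \<Rightarrow> complex"
    assume asm: "(\<forall>tj\<in>basis_index p k s. c tj \<in> \<rat>) \<and>
          (\<Sum>tj\<in>basis_index p k s. c tj * basis_elem r p k \<alpha> tj) = 0"
    hence crat: "\<And>tj. tj \<in> I \<Longrightarrow> c tj \<in> \<rat>" and csum: "(\<Sum>tj\<in>I. c tj * basis_elem r p k \<alpha> tj) = 0"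
      unfolding I_def by auto
    show "\<forall>tj\<in>basis_index p k s. c tj = 0"
    proof (rule ccontr)
      assume "\<not> (\<forall>tj\<in>basis_index p k s. c tj = 0)"
      then obtain tj0 where tj0: "tj0 \<in> I" "c tj0 \<noteq> 0" unfolding I_def by blast
      define d where "d = (\<lambda>tj. SOME q. c tj = of_rat q)"
      have d: "c tj = of_rat (d tj)" if "tj \<in> I" for tj
      proof -
        from crat[OF that] obtain q where "c tj = of_rat q" by (elim Rats_cases) simp
        hence "\<exists>q. c tj = of_rat q" by blast
        thus ?thesis unfolding d_def by (rule someI_ex)
      qed
      define Pp where "Pp = (\<lambda>tj::nat\<times>nat. Polynomial.monom (1::int) (snd tj) * h_poly r p k (fst tj))"
      define w where "w = (\<lambda>tj::nat\<times>nat. d tj / of_nat (p ^ fst tj))"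
      define q :: "rat poly" where "q = (\<Sum>tj\<in>I. smult (w tj) (map_poly of_int (Pp tj)))"
      interpret Rq: map_poly_comm_ring_hom "of_rat :: rat \<Rightarrow> complex" ..
      have ev: "poly (map_poly of_rat q) \<alpha> = 0"
      proof -
        have "poly (map_poly of_rat q) \<alpha> = (\<Sum>tj\<in>I. of_rat (w tj) * poly (map_poly of_int (Pp tj)) \<alpha>)"
        proof -
          have "map_poly (of_rat :: rat \<Rightarrow> complex) q =
                (\<Sum>tj\<in>I. smult (of_rat (w tj)) (map_poly of_rat (map_poly of_int (Pp tj))))"
            unfolding q_def by (simp add: Rq.hom_sum of_rat_hom.map_poly_hom_smult)
          also have "\<dots> = (\<Sum>tj\<in>I. smult (of_rat (w tj)) (map_poly of_int (Pp tj)))"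
            by (rule sum.cong) (simp_all add: map_poly_map_poly o_def)
          finally show ?thesis by (simp add: poly_sum)
        qed
        also have "\<dots> = (\<Sum>tj\<in>I. c tj * basis_elem r p k \<alpha> tj)"
        proof (rule sum.cong)
          fix tj assume tj: "tj \<in> I"
          obtain t j where tj': "tj = (t,j)" by (cases tj)
          have "poly (map_poly of_int (Pp tj)) \<alpha> = \<alpha> ^ j * poly (map_poly of_int (h_poly r p k t)) \<alpha>"
            unfolding Pp_def tj' by (simp add: of_int_poly_hom.hom_mult map_poly_monom poly_monom)
          thus "of_rat (w tj) * poly (map_poly of_int (Pp tj)) \<alpha> = c tj * basis_elem r p k \<alpha> tj"
            using d[OF tj] unfolding w_def tj' basis_elem_def by (simp add: of_rat_divide of_rat_power of_rat_of_nat_eq)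
        qed simp
        also have "\<dots> = 0" by (rule csum)
        finally show ?thesis .
      qed
      have coeffq: "coeff q l = (\<Sum>tj\<in>I. w tj * of_int (coeff (Pp tj) l))" for l
        unfolding q_def by (simp add: coeff_sum coeff_map_poly)
      have tkI: "fst tj \<le> k" if "tj \<in> I" for tj
        using Dg_bounds(1)[OF p0 sk, of "fst tj" "snd tj"] that sk unfolding I_def by auto
      have top1: "coeff (Pp tj) (Dg p k tj) = 1" if "tj \<in> I" for tj
        using coeff_Pg_top(1)[OF p0 tkI[OF that], where r=r and j="snd tj"] unfolding Pp_def by (cases tj) simp
      have top0: "coeff (Pp tj) l = 0" if "tj \<in> I" "l > Dg p k tj" for tj l
        using coeff_Pg_top(2)[OF p0 tkI[OF that(1)], where r=r and j="snd tj", of l] that(2) unfolding Pp_def by (cases tj) simp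
      have Dlt: "Dg p k tj < p^k" if "tj \<in> I" for tj
        using Dg_bounds(4)[OF p0 sk, of "fst tj" "snd tj"] that unfolding I_def by simp
      define J where "J = {tj\<in>I. d tj \<noteq> 0}"
      have finJ: "finite J" using fin unfolding J_def by simp
      have tj0J: "tj0 \<in> J" using tj0 d[OF tj0(1)] unfolding J_def by auto
      define M where "M = Max (Dg p k ` J)"
      have "M \<in> Dg p k ` J" unfolding M_def using finJ tj0J by (intro Max_in) auto
      then obtain tjm where tjm: "tjm \<in> J" "Dg p k tjm = M" by blast
      have Mge: "Dg p k tj \<le> M" if "tj \<in> J" for tj
        unfolding M_def using finJ that by (intro Max_ge) auto
      have tjmI: "tjm \<in> I" and dtjm: "d tjm \<noteq> 0" using tjm(1) unfolding J_def by auto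
      have "coeff q M = w tjm * of_int (coeff (Pp tjm) M) + (\<Sum>tj\<in>I - {tjm}. w tj * of_int (coeff (Pp tj) M))"
        unfolding coeffq using fin tjmI by (rule sum.remove)
      also have "(\<Sum>tj\<in>I - {tjm}. w tj * of_int (coeff (Pp tj) M)) = 0"
      proof (rule sum.neutral, intro ballI)
        fix tj assume tj: "tj \<in> I - {tjm}"
        show "w tj * of_int (coeff (Pp tj) M) = 0"
        proof (cases "d tj = 0")
          case True thus ?thesis by (simp add: w_def)
        next
          case False
          hence "tj \<in> J" using tj unfolding J_def by auto
          hence le: "Dg p k tj \<le> M" by (rule Mge)
          have "Dg p k tj \<noteq> Dg p k tjm"
          proof
            assume "Dg p k tj = Dg p k tjm"
            hence "tj = tjm" using Dg_inj[OF p0 sk] tj tjmI unfolding I_def inj_on_def by blast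
            thus False using tj by simp
          qed
          hence "Dg p k tj < M" using le tjm(2) by simp
          hence "coeff (Pp tj) M = 0" using tj by (intro top0) auto
          thus ?thesis by simp
        qed
      qed
      also have "coeff (Pp tjm) M = 1" using top1[OF tjmI] tjm(2) by simp
      finally have "coeff q M = w tjm" by simp
      moreover have "w tjm \<noteq> 0" using dtjm p0 unfolding w_def by simp
      ultimately have q0: "q \<noteq> 0" by auto
      have "degree q \<le> p^k - 1"
      proof (rule degree_le, intro allI impI)
        fix l assume l: "l > p^k - 1"
        show "coeff q l = 0" unfolding coeffq
        proof (rule sum.neutral, intro ballI)
          fix tj assume tj: "tj \<in> I"
          have "Dg p k tj < l" using Dlt[OF tj] l by simp
          thus "w tj * of_int (coeff (Pp tj) l) = 0" using top0[OF tj] by simp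
        qed
      qed
      hence dq: "degree q < p^k" using pk0 by linarith
      show False by (rule no_small_root[OF sq m1 m2 apk q0 dq ev])
    qed
  qed
  show ?thesis using part1 part2 part3 by blast
qed

end
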